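(* Let $U$ be an orthogonal $N\times N$ matrix and $k\ge2$. Then $$\mathbb E_{z\sim\mathcal D_{U,k}}\big[\phi_U(z^{(1)},\dots,z^{(k)})\big]\ \ge\ (2/\pi)^{k-1}.$$
   Context: $\phi_U(z^{(1)},\dots,z^{(k)})=\frac1N\sum_{i_1,\dots,i_k\in[N]}z^{(1)}_{i_1}U_{i_1,i_2}z^{(2)}_{i_2}\cdots U_{i_{k-1},i_k}z^{(k)}_{i_k}$. $\mathcal D_{U,k}$: with independent standard Gaussian vectors $X^{(1)},\dots,X^{(k-1)}\in\mathbb R^N$ and $Y^{(i)}=U^{\mathsf T}X^{(i)}$, set $Z^{(1)}=X^{(1)}$, $Z^{(i)}=Y^{(i-1)}\odot X^{(i)}$ (coordinatewise product) for $2\le i\le k-1$, $Z^{(k)}=Y^{(k-1)}$; $z=(z^{(1)},\dots,z^{(k)})\sim\mathcal D_{U,k}$ means $z^{(i)}=\mathrm{sgn}(Z^{(i)})$ coordinatewise. *)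

theory Defs
  imports "HOL-Analysis.Analysis" "HOL-Probability.Probability"
begin

definition std_gauss :: "real measure" where
  "std_gauss = density lborel std_normal_density"

text \<open>phi_U(z^(1),...,z^(k)) = 1/N sum over i_1..i_k of
  z1_{i1} U_{i1 i2} z2_{i2} ... U_{i(k-1) ik} zk_{ik}.
  The vectors z^(m) are given as a function z :: nat => real^'n, used for m = 1..k.\<close>
definition phiU :: "real^'n^'n \<Rightarrow> nat \<Rightarrow> (nat \<Rightarrow> real^'n) \<Rightarrow> real" where
  "phiU U k z = (1 / real CARD('n)) *
     (\<Sum>i\<in>PiE {1..k} (\<lambda>_. (UNIV :: 'n set)).
        (\<Prod>m\<in>{1..k}. z m $ i m) * (\<Prod>m\<in>{1..<k}. U $ i m $ i (Suc m)))"

text \<open>Gaussian sample space: omega (i, j) is the j-th coordinate of X^(i), i = 1..k-1,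
  all independent standard Gaussians.\<close>
definition gauss_space :: "nat \<Rightarrow> ((nat \<times> 'n::finite) \<Rightarrow> real) measure" where
  "gauss_space k = PiM ({1..<k} \<times> (UNIV :: 'n set)) (\<lambda>_. std_gauss)"

definition Xvec :: "((nat \<times> 'n::finite) \<Rightarrow> real) \<Rightarrow> nat \<Rightarrow> real^'n" where
  "Xvec \<omega> i = (\<chi> j. \<omega> (i, j))"

definition Yvec :: "real^'n^'n \<Rightarrow> ((nat \<times> 'n::finite) \<Rightarrow> real) \<Rightarrow> nat \<Rightarrow> real^'n" where
  "Yvec U \<omega> i = transpose U *v Xvec \<omega> i"

definition Zvec :: "real^'n^'n \<Rightarrow> nat \<Rightarrow> ((nat \<times> 'n::finite) \<Rightarrow> real) \<Rightarrow> nat \<Rightarrow> real^'n" where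
  "Zvec U k \<omega> i =
     (if i = 1 then Xvec \<omega> 1
      else if i = k then Yvec U \<omega> (k - 1)
      else (\<chi> j. Yvec U \<omega> (i - 1) $ j * Xvec \<omega> i $ j))"

text \<open>z^(i) = sgn(Z^(i)) coordinatewise: a sample of D_{U,k}.\<close>
definition zvec :: "real^'n^'n \<Rightarrow> nat \<Rightarrow> ((nat \<times> 'n::finite) \<Rightarrow> real) \<Rightarrow> nat \<Rightarrow> real^'n" where
  "zvec U k \<omega> i = (\<chi> j. sgn (Zvec U k \<omega> i $ j))"

end

theory Submission
  imports Defs
begin


lemma inner_x:
  fixes s :: real
  shows "(\<integral>\<^sup>+x. ennreal (\<bar>x\<bar> * std_normal_density x * std_normal_density (x * s)) \<partial>lborel)
     = ennreal (1 / (pi * (1 + s\<^sup>2)))"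
proof -
  define \<sigma> where "\<sigma> = 1 / sqrt (1 + s\<^sup>2)"
  have sp: "0 < 1 + s\<^sup>2" by (simp add: add_pos_nonneg)
  have \<sigma>pos: "0 < \<sigma>" using sp by (simp add: \<sigma>_def)
  have eq: "\<bar>x\<bar> * std_normal_density x * std_normal_density (x * s)
      = (\<sigma> / sqrt (2 * pi)) * (normal_density 0 \<sigma> x * \<bar>x - 0\<bar> ^ (2 * 0 + 1))" for x
  proof -
    have "\<sigma>\<^sup>2 = 1 / (1 + s\<^sup>2)" using sp by (simp add: \<sigma>_def power_divide)
    then have h: "\<sigma>\<^sup>2 + \<sigma>\<^sup>2 * s\<^sup>2 = 1" using sp by (simp add: field_simps)
    have h2: "x\<^sup>2 = \<sigma>\<^sup>2 * x\<^sup>2 + \<sigma>\<^sup>2 * (s\<^sup>2 * x\<^sup>2)"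
      using arg_cong[OF h, of "\<lambda>t. t * x\<^sup>2"] by (simp add: algebra_simps)
    show ?thesis
      using sp \<sigma>pos h2
      by (simp add: normal_density_def std_normal_density_def real_sqrt_mult mult_exp_exp
           power_mult_distrib field_simps)
  qed
  have int: "integrable lborel (\<lambda>x. normal_density 0 \<sigma> x * \<bar>x - 0\<bar> ^ (2 * 0 + 1))"
    using integrable_normal_moment_abs[OF \<sigma>pos, of 0 "2*0+1"] by simp
  have "(\<integral>\<^sup>+x. ennreal (\<bar>x\<bar> * std_normal_density x * std_normal_density (x * s)) \<partial>lborel)
     = ennreal (\<integral>x. (\<sigma> / sqrt (2 * pi)) * (normal_density 0 \<sigma> x * \<bar>x - 0\<bar> ^ (2 * 0 + 1)) \<partial>lborel)"
    unfolding eq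
    using int \<sigma>pos
    by (intro nn_integral_eq_integral) (auto intro!: integrable_divide integrable_mult_right AE_I2)
  also have "(\<integral>x. (\<sigma> / sqrt (2 * pi)) * (normal_density 0 \<sigma> x * \<bar>x - 0\<bar> ^ (2 * 0 + 1)) \<partial>lborel)
     = (\<sigma> / sqrt (2 * pi)) * (2 ^ 0 * \<sigma> ^ (2 * 0 + 1) * fact 0 * sqrt (2 / pi))"
    using integral_normal_moment_abs_odd[OF \<sigma>pos, of 0 0] by simp
  also have "\<dots> = 1 / (pi * (1 + s\<^sup>2))"
  proof -
    have q: "sqrt pi * (sqrt pi * sqrt 2) = pi * sqrt 2"
      by (subst mult.assoc[symmetric]) simp
    have "sqrt 2 / (sqrt pi * (sqrt pi * sqrt 2) + s * (s * (sqrt pi * (sqrt pi * sqrt 2))))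
        = 1 / (pi + pi * (s * s))"
      unfolding q
    proof -
      have r: "pi * sqrt 2 + s * (s * (pi * sqrt 2)) = sqrt 2 * (pi + pi * (s * s))"
        by (simp add: algebra_simps)
      have "0 < pi + pi * (s * s)" using sp by (simp add: add_pos_nonneg)
      then show "sqrt 2 / (pi * sqrt 2 + s * (s * (pi * sqrt 2))) = 1 / (pi + pi * (s * s))"
        unfolding r by simp
    qed
    then show ?thesis
      using sp by (simp add: \<sigma>_def power2_eq_square real_sqrt_divide real_sqrt_mult field_simps)
  qed
  finally show ?thesis .
qed

lemma cone:
  fixes a :: real
  assumes a: "0 < a"
  shows "(\<integral>\<^sup>+x. \<integral>\<^sup>+w. ennreal (std_normal_density x * std_normal_density w) * indicator {w. \<bar>w\<bar> < a * \<bar>x\<bar>} w \<partial>lborel \<partial>lborel)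
     = ennreal (2 / pi * arctan a)"
proof -
  let ?h = "\<lambda>x s. ennreal (\<bar>x\<bar> * std_normal_density x * std_normal_density (x * s)) * indicator {-a<..<a} s"
  have "(\<integral>\<^sup>+x. \<integral>\<^sup>+w. ennreal (std_normal_density x * std_normal_density w) * indicator {w. \<bar>w\<bar> < a * \<bar>x\<bar>} w \<partial>lborel \<partial>lborel)
     = (\<integral>\<^sup>+x. \<integral>\<^sup>+s. ?h x s \<partial>lborel \<partial>lborel)"
  proof (rule nn_integral_cong)
    fix x :: real
    show "(\<integral>\<^sup>+w. ennreal (std_normal_density x * std_normal_density w) * indicator {w. \<bar>w\<bar> < a * \<bar>x\<bar>} w \<partial>lborel)
        = (\<integral>\<^sup>+s. ?h x s \<partial>lborel)"
    proof (cases "x = 0")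
      case True
      then show ?thesis by simp
    next
      case False
      have "(\<integral>\<^sup>+w. ennreal (std_normal_density x * std_normal_density w) * indicator {w. \<bar>w\<bar> < a * \<bar>x\<bar>} w \<partial>lborel)
        = ennreal \<bar>x\<bar> * (\<integral>\<^sup>+s. ennreal (std_normal_density x * std_normal_density (0 + x * s)) * indicator {w. \<bar>w\<bar> < a * \<bar>x\<bar>} (0 + x * s) \<partial>lborel)"
        using False by (subst nn_integral_real_affine[where t=0 and c=x]) auto
      also have "\<dots> = (\<integral>\<^sup>+s. ennreal \<bar>x\<bar> * (ennreal (std_normal_density x * std_normal_density (0 + x * s)) * indicator {w. \<bar>w\<bar> < a * \<bar>x\<bar>} (0 + x * s)) \<partial>lborel)"
        by (rule nn_integral_cmult[symmetric]) auto
      also have "\<dots> = (\<integral>\<^sup>+s. ?h x s \<partial>lborel)"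
      proof (rule nn_integral_cong)
        fix s :: real
        have "(\<bar>x * s\<bar> < a * \<bar>x\<bar>) = (s \<in> {-a<..<a})"
          using False by (auto simp: abs_mult abs_less_iff)
        then show "ennreal \<bar>x\<bar> * (ennreal (std_normal_density x * std_normal_density (0 + x * s)) * indicator {w. \<bar>w\<bar> < a * \<bar>x\<bar>} (0 + x * s)) = ?h x s"
          by (auto simp: indicator_def ennreal_mult[symmetric] mult.assoc)
      qed
      finally show ?thesis .
    qed
  qed
  also have "\<dots> = (\<integral>\<^sup>+s. \<integral>\<^sup>+x. ?h x s \<partial>lborel \<partial>lborel)"
    by (rule lborel_pair.Fubini'[symmetric]) measurable
  also have "\<dots> = (\<integral>\<^sup>+s. ennreal (1 / (pi * (1 + s\<^sup>2))) * indicator {-a..a} s \<partial>lborel)"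
  proof (rule nn_integral_cong_AE)
    have "AE s in lborel. s \<noteq> a \<and> s \<noteq> -a"
      by (intro eventually_conj AE_lborel_singleton)
    then show "AE s in lborel. (\<integral>\<^sup>+x. ?h x s \<partial>lborel) = ennreal (1 / (pi * (1 + s\<^sup>2))) * indicator {-a..a} s"
    proof eventually_elim
      case (elim s)
      have "(\<integral>\<^sup>+x. ?h x s \<partial>lborel) = (\<integral>\<^sup>+x. ennreal (\<bar>x\<bar> * std_normal_density x * std_normal_density (x * s)) \<partial>lborel) * indicator {-a<..<a} s"
        by (rule nn_integral_multc) measurable
      also have "\<dots> = ennreal (1 / (pi * (1 + s\<^sup>2))) * indicator {-a..a} s"
        using elim by (auto simp: inner_x indicator_def)
      finally show ?case .
    qed
  qed
  also have "\<dots> = ennreal (arctan a / pi - arctan (-a) / pi)"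
  proof -
    have p1: "0 < pi + s * (s * pi)" for s :: real
    proof -
      have "0 \<le> (s * s) * pi" by simp
      then show ?thesis by (intro add_pos_nonneg) (auto simp: mult.assoc)
    qed
    have p2: "pi * pi + s * (s * (pi * pi)) = pi * (pi + s * (s * pi))" for s :: real
      by (simp add: algebra_simps)
    have p3: "pi / (pi * pi + s * (s * (pi * pi))) = 1 / (pi + s * (s * pi))" for s :: real
      unfolding p2 using p1[of s] by simp
    show ?thesis
    using a p1 less_imp_le[OF p1] p3
    by (intro nn_integral_FTC_Icc)
       (auto intro!: derivative_eq_intros simp: add_pos_nonneg field_simps power2_eq_square)
  qed
  also have "\<dots> = ennreal (2 / pi * arctan a)"
    by (simp add: arctan_minus field_simps)
  finally show ?thesis .
qed



lemma (in prob_space) indep_var_lborel: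
  assumes "indep_var borel X borel Y"
  shows "indep_var lborel X lborel Y"
  using indep_var_compose[OF assms, of "\<lambda>x. x" lborel "\<lambda>x. x" lborel]
  by (simp add: o_def)

lemma arctan_ge:
  fixes r s :: real
  assumes "0 < s" "r\<^sup>2 + s\<^sup>2 = 1"
  shows "\<bar>r\<bar> \<le> arctan (\<bar>r\<bar> / s)"
proof -
  define a where "a = \<bar>r\<bar> / s"
  have "1 + a\<^sup>2 = 1 / s\<^sup>2"
    using assms by (simp add: a_def power_divide field_simps)
  then have "sqrt (1 + a\<^sup>2) = 1 / s"
    using assms by (simp add: real_sqrt_divide)
  then have "sin (arctan a) = \<bar>r\<bar>"
    using assms by (simp add: sin_arctan a_def)
  moreover have "0 \<le> arctan a" using assms by (simp add: a_def)
  ultimately show ?thesis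
    using sin_x_le_x[of "arctan a"] by (simp add: a_def)
qed

lemma sgn_pq:
  fixes p q :: real
  shows "2 * (if \<bar>q\<bar> < \<bar>p\<bar> then 1 else 0) \<le> sgn p * (sgn (p + q) + sgn (p - q))"
  by (cases "p > 0"; cases "p < 0"; cases "p + q > 0"; cases "p + q < 0"; cases "p - q > 0"; cases "p - q < 0")
     (auto simp: sgn_real_def abs_real_def)

lemma sgn_pointwise:
  fixes x w r s :: real
  assumes "r \<noteq> 0" "0 < s"
  shows "2 * \<bar>r\<bar> * (if s * \<bar>w\<bar> < \<bar>r\<bar> * \<bar>x\<bar> then 1 else 0)
     \<le> r * (sgn x * sgn (r * x + s * w)) + r * (sgn x * sgn (r * x + s * (- w)))"
proof -
  have e1: "r * sgn x = \<bar>r\<bar> * sgn (r * x)"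
    by (simp add: sgn_mult mult.assoc[symmetric] abs_mult_sgn)
  have e2: "s * \<bar>w\<bar> = \<bar>s * w\<bar>" "\<bar>r\<bar> * \<bar>x\<bar> = \<bar>r * x\<bar>" using assms by (simp_all add: abs_mult)
  have "r * (sgn x * sgn (r * x + s * w)) + r * (sgn x * sgn (r * x + s * (- w)))
     = \<bar>r\<bar> * (sgn (r * x) * (sgn (r * x + s * w) + sgn (r * x - s * w)))"
  proof -
    have "r * (sgn x * sgn (r * x + s * w)) + r * (sgn x * sgn (r * x + s * (- w)))
       = (r * sgn x) * (sgn (r * x + s * w) + sgn (r * x - s * w))"
      by (simp add: algebra_simps)
    also have "\<dots> = \<bar>r\<bar> * (sgn (r * x) * (sgn (r * x + s * w) + sgn (r * x - s * w)))"
      by (simp only: e1 mult.assoc)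
    finally show ?thesis .
  qed
  moreover have "2 * (if \<bar>s * w\<bar> < \<bar>r * x\<bar> then 1 else 0) \<le> sgn (r * x) * (sgn (r * x + s * w) + sgn (r * x - s * w))"
    by (rule sgn_pq)
  ultimately show ?thesis
    unfolding e2
  proof -
    assume eq: "r * (sgn x * sgn (r * x + s * w)) + r * (sgn x * sgn (r * x + s * - w)) =
      \<bar>r\<bar> * (sgn (r * x) * (sgn (r * x + s * w) + sgn (r * x - s * w)))"
      and le: "2 * (if \<bar>s * w\<bar> < \<bar>r * x\<bar> then 1 else 0) \<le> sgn (r * x) * (sgn (r * x + s * w) + sgn (r * x - s * w))"
    have "\<bar>r\<bar> * (2 * (if \<bar>s * w\<bar> < \<bar>r * x\<bar> then 1 else 0)) \<le> \<bar>r\<bar> * (sgn (r * x) * (sgn (r * x + s * w) + sgn (r * x - s * w)))"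
      by (rule mult_left_mono[OF le]) simp
    then show "2 * \<bar>r\<bar> * (if \<bar>s * w\<bar> < \<bar>r * x\<bar> then 1 else 0) \<le> r * (sgn x * sgn (r * x + s * w)) + r * (sgn x * sgn (r * x + s * - w))"
      unfolding eq by (simp only: mult.assoc mult.left_commute)
  qed
qed

lemma (in prob_space) key2:
  fixes X W :: "'a \<Rightarrow> real" and r s :: real
  assumes X: "distributed M lborel X (\<lambda>x. ennreal (std_normal_density x))"
    and W: "distributed M lborel W (\<lambda>x. ennreal (std_normal_density x))"
    and ind: "indep_var borel X borel W"
    and r: "r \<noteq> 0" and s: "0 < s" and rs: "r\<^sup>2 + s\<^sup>2 = 1"
  shows "(2 / pi) * r\<^sup>2 \<le> r * (\<integral>\<omega>. sgn (X \<omega>) * sgn (r * X \<omega> + s * W \<omega>) \<partial>M)"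
proof -
  have [measurable]: "X \<in> borel_measurable M" "W \<in> borel_measurable M"
    using X W by (auto dest: distributed_measurable)
  have W': "distributed M lborel (\<lambda>\<omega>. - W \<omega>) (\<lambda>x. ennreal (std_normal_density x))"
    using normal_density_affine[OF W, where \<alpha>="-1" and \<beta>=0] by simp
  have ind': "indep_var borel X borel (\<lambda>\<omega>. - W \<omega>)"
    using indep_var_compose[OF ind, of "\<lambda>x. x" borel "\<lambda>x. - x" borel] by (simp add: o_def)
  let ?f = "\<lambda>(x::real, y::real). ennreal (std_normal_density x) * ennreal (std_normal_density y)"
  define D where "D = (\<lambda>z::real\<times>real. std_normal_density (fst z) * std_normal_density (snd z))"
  let ?F = "\<lambda>z. ennreal (D z)"
  have J1: "distributed M (lborel \<Otimes>\<^sub>M lborel) (\<lambda>\<omega>. (X \<omega>, W \<omega>)) ?f"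
    by (rule distributed_joint_indep[OF _ _ X W indep_var_lborel[OF ind]]) (simp_all add: lborel.sigma_finite_measure_axioms)
  have J2: "distributed M (lborel \<Otimes>\<^sub>M lborel) (\<lambda>\<omega>. (X \<omega>, - W \<omega>)) ?f"
    by (rule distributed_joint_indep[OF _ _ X W' indep_var_lborel[OF ind']]) (simp_all add: lborel.sigma_finite_measure_axioms)
  have fF: "?f = ?F" by (auto simp: ennreal_mult fun_eq_iff D_def)
  have J1': "distributed M (lborel \<Otimes>\<^sub>M lborel) (\<lambda>\<omega>. (X \<omega>, W \<omega>)) (\<lambda>z. ennreal (D z))"
    using J1 unfolding fF .
  have J2': "distributed M (lborel \<Otimes>\<^sub>M lborel) (\<lambda>\<omega>. (X \<omega>, - W \<omega>)) (\<lambda>z. ennreal (D z))"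
    using J2 unfolding fF .
  define g where "g = (\<lambda>z::real \<times> real. sgn (fst z) * sgn (r * fst z + s * snd z))"
  have [measurable]: "g \<in> borel_measurable (lborel \<Otimes>\<^sub>M lborel)"
    unfolding g_def by measurable
  have E1: "(\<integral>\<omega>. g (X \<omega>, W \<omega>) \<partial>M) = (\<integral>z. D z * g z \<partial>(lborel \<Otimes>\<^sub>M lborel))"
    by (rule distributed_integral[OF J1', symmetric]) (auto simp: D_def)
  have E2: "(\<integral>\<omega>. g (X \<omega>, - W \<omega>) \<partial>M) = (\<integral>z. D z * g z \<partial>(lborel \<Otimes>\<^sub>M lborel))"
    by (rule distributed_integral[OF J2', symmetric]) (auto simp: D_def)
  define h where "h = (\<lambda>z::real \<times> real. if s * \<bar>snd z\<bar> < \<bar>r\<bar> * \<bar>fst z\<bar> then 1 else (0::real))"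
  have [measurable]: "h \<in> borel_measurable (lborel \<Otimes>\<^sub>M lborel)"
    unfolding h_def by measurable
  have gint: "integrable M (\<lambda>\<omega>. g (X \<omega>, W \<omega>))" "integrable M (\<lambda>\<omega>. g (X \<omega>, - W \<omega>))"
    by (auto intro!: integrable_const_bound[where B=1] simp: g_def abs_sgn_eq abs_mult)
  have hint: "integrable M (\<lambda>\<omega>. h (X \<omega>, W \<omega>))"
    by (auto intro!: integrable_const_bound[where B=1] simp: h_def)
  have "2 * \<bar>r\<bar> * (\<integral>\<omega>. h (X \<omega>, W \<omega>) \<partial>M) = (\<integral>\<omega>. 2 * \<bar>r\<bar> * h (X \<omega>, W \<omega>) \<partial>M)"
    by simp
  also have "\<dots> \<le> (\<integral>\<omega>. r * g (X \<omega>, W \<omega>) + r * g (X \<omega>, - W \<omega>) \<partial>M)"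
  proof (rule integral_mono)
    show "integrable M (\<lambda>\<omega>. 2 * \<bar>r\<bar> * h (X \<omega>, W \<omega>))" using hint by simp
    show "integrable M (\<lambda>\<omega>. r * g (X \<omega>, W \<omega>) + r * g (X \<omega>, - W \<omega>))" using gint by simp
    fix \<omega> show "2 * \<bar>r\<bar> * h (X \<omega>, W \<omega>) \<le> r * g (X \<omega>, W \<omega>) + r * g (X \<omega>, - W \<omega>)"
      using sgn_pointwise[OF r s, of "W \<omega>" "X \<omega>"] by (simp add: h_def g_def)
  qed
  also have "\<dots> = r * (\<integral>\<omega>. g (X \<omega>, W \<omega>) \<partial>M) + r * (\<integral>\<omega>. g (X \<omega>, - W \<omega>) \<partial>M)"
    using gint by simp
  also have "\<dots> = 2 * (r * (\<integral>\<omega>. g (X \<omega>, W \<omega>) \<partial>M))"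
    unfolding E1 E2 by simp
  finally have main: "\<bar>r\<bar> * (\<integral>\<omega>. h (X \<omega>, W \<omega>) \<partial>M) \<le> r * (\<integral>\<omega>. g (X \<omega>, W \<omega>) \<partial>M)"
    by simp
  define a where "a = \<bar>r\<bar> / s"
  have a: "0 < a" using r s by (simp add: a_def)
  have "ennreal (\<integral>\<omega>. h (X \<omega>, W \<omega>) \<partial>M) = (\<integral>\<^sup>+\<omega>. ennreal (h (X \<omega>, W \<omega>)) \<partial>M)"
    by (rule nn_integral_eq_integral[symmetric, OF hint]) (simp add: h_def)
  also have "\<dots> = (\<integral>\<^sup>+z. ?f z * ennreal (h z) \<partial>(lborel \<Otimes>\<^sub>M lborel))"
    by (rule distributed_nn_integral[OF J1, symmetric]) measurable
  also have "\<dots> = (\<integral>\<^sup>+x. \<integral>\<^sup>+w. ?f (x, w) * ennreal (h (x, w)) \<partial>lborel \<partial>lborel)"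
    by (rule lborel.nn_integral_fst[symmetric]) measurable
  also have "\<dots> = (\<integral>\<^sup>+x. \<integral>\<^sup>+w. ennreal (std_normal_density x * std_normal_density w) * indicator {w. \<bar>w\<bar> < a * \<bar>x\<bar>} w \<partial>lborel \<partial>lborel)"
  proof (intro nn_integral_cong)
    fix x w :: real
    have "(s * \<bar>w\<bar> < \<bar>r\<bar> * \<bar>x\<bar>) = (\<bar>w\<bar> < a * \<bar>x\<bar>)"
      using s by (simp add: a_def field_simps)
    then show "?f (x, w) * ennreal (h (x, w)) = ennreal (std_normal_density x * std_normal_density w) * indicator {w. \<bar>w\<bar> < a * \<bar>x\<bar>} w"
      by (simp add: h_def indicator_def ennreal_mult)
  qed
  also have "\<dots> = ennreal (2 / pi * arctan a)"
    by (rule cone[OF a])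
  finally have "(\<integral>\<omega>. h (X \<omega>, W \<omega>) \<partial>M) = 2 / pi * arctan a"
    using a by (subst (asm) ennreal_inj) (auto intro!: integral_nonneg_AE simp: h_def)
  moreover have "\<bar>r\<bar> \<le> arctan a"
    unfolding a_def by (rule arctan_ge[OF s rs])
  ultimately have "\<bar>r\<bar> * (2 / pi * \<bar>r\<bar>) \<le> \<bar>r\<bar> * (\<integral>\<omega>. h (X \<omega>, W \<omega>) \<partial>M)"
    by (intro mult_left_mono) (auto intro!: divide_right_mono)
  then show ?thesis
  proof -
    have "(2 / pi) * r\<^sup>2 = \<bar>r\<bar> * (2 / pi * \<bar>r\<bar>)"
      by (simp add: power2_eq_square abs_mult_self_eq)
    also have "\<dots> \<le> \<bar>r\<bar> * (\<integral>\<omega>. h (X \<omega>, W \<omega>) \<partial>M)" by fact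
    also have "\<dots> \<le> r * (\<integral>\<omega>. g (X \<omega>, W \<omega>) \<partial>M)" by (rule main)
    finally show ?thesis by (simp add: g_def)
  qed
qed



lemma (in prob_space) AE_nonzero_std:
  assumes X: "distributed M lborel X (\<lambda>x. ennreal (std_normal_density x))"
  shows "AE \<omega> in M. X \<omega> \<noteq> 0"
proof -
  have [measurable]: "X \<in> borel_measurable M"
    using X by (auto dest: distributed_measurable)
  have "emeasure M (X -` {0} \<inter> space M) = (\<integral>\<^sup>+x. ennreal (std_normal_density x) * indicator {0} x \<partial>lborel)"
    by (rule distributed_emeasure[OF X]) simp
  also have "\<dots> = 0"
    by (subst nn_integral_0_iff_AE) (use AE_lborel_singleton[of 0] in \<open>auto elim!: eventually_mono\<close>)
  finally have "X -` {0} \<inter> space M \<in> null_sets M"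
    by (simp add: null_sets_def)
  then show ?thesis
    by (rule AE_I') auto
qed

lemma (in prob_space) block:
  fixes X :: "'n::finite \<Rightarrow> 'a \<Rightarrow> real" and u :: "'n \<Rightarrow> real"
  assumes ind: "indep_vars (\<lambda>_. borel) X UNIV"
    and dist: "\<And>c. distributed M lborel (X c) (\<lambda>x. ennreal (std_normal_density x))"
    and u: "(\<Sum>c\<in>UNIV. (u c)\<^sup>2) = 1"
  shows "(2 / pi) * (u a)\<^sup>2 \<le> u a * (\<integral>\<omega>. sgn (X a \<omega>) * sgn (\<Sum>c\<in>UNIV. u c * X c \<omega>) \<partial>M)"
proof (cases "u a = 0")
  case True
  then show ?thesis by simp
next
  case ua: False
  have meas[measurable]: "X c \<in> borel_measurable M" for c
    using dist[of c] by (auto dest: distributed_measurable)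
  define S where "S = {c. c \<noteq> a \<and> u c \<noteq> 0}"
  have aS: "a \<notin> S" by (simp add: S_def)
  have sumsplit: "(\<Sum>c\<in>UNIV. f c) = f a + (\<Sum>c\<in>S. f c)" if "\<And>c. u c = 0 \<Longrightarrow> f c = 0" for f :: "'n \<Rightarrow> real"
  proof -
    have "(\<Sum>c\<in>UNIV. f c) = f a + (\<Sum>c\<in>UNIV - {a}. f c)"
      by (simp add: sum.remove)
    also have "(\<Sum>c\<in>UNIV - {a}. f c) = (\<Sum>c\<in>S. f c)"
      by (rule sum.mono_neutral_right) (auto simp: S_def that)
    finally show ?thesis .
  qed
  have lin: "(\<Sum>c\<in>UNIV. u c * X c \<omega>) = u a * X a \<omega> + (\<Sum>c\<in>S. u c * X c \<omega>)" for \<omega>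
    by (rule sumsplit) simp
  have sq: "(\<Sum>c\<in>S. (u c)\<^sup>2) = 1 - (u a)\<^sup>2"
    using sumsplit[of "\<lambda>c. (u c)\<^sup>2"] u by simp
  show ?thesis
  proof (cases "S = {}")
    case True
    then have ua1: "(u a)\<^sup>2 = 1" using sq by simp
    then have "\<bar>u a\<bar> = 1" by (auto simp: power2_eq_1_iff abs_real_def)
    have "u a * (\<integral>\<omega>. sgn (X a \<omega>) * sgn (\<Sum>c\<in>UNIV. u c * X c \<omega>) \<partial>M) = u a * (\<integral>\<omega>. sgn (u a) \<partial>M)"
    proof -
      have "(\<integral>\<omega>. sgn (X a \<omega>) * sgn (\<Sum>c\<in>UNIV. u c * X c \<omega>) \<partial>M) = (\<integral>\<omega>. sgn (u a) \<partial>M)"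
      proof (rule integral_cong_AE)
        show "AE \<omega> in M. sgn (X a \<omega>) * sgn (\<Sum>c\<in>UNIV. u c * X c \<omega>) = sgn (u a)"
          using AE_nonzero_std[OF dist[of a]]
        proof eventually_elim
          case (elim \<omega>)
          then show ?case
          proof -
            have ss: "sgn (X a \<omega>) * sgn (X a \<omega>) = 1" using elim by (simp add: sgn_real_def)
            show ?case
              unfolding lin True using elim by (simp add: sgn_mult mult.left_commute[of "sgn (X a \<omega>)"] ss)
          qed
        qed
      qed measurable
      then show ?thesis by simp
    qed
    also have "\<dots> = \<bar>u a\<bar>" by (simp add: prob_space abs_real_def sgn_real_def)
    finally show ?thesis using ua1 \<open>\<bar>u a\<bar> = 1\<close> pi_gt3 by simp
  next
    case Sne: False
    have finS: "finite S" by simp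
    define \<sigma> where "\<sigma> = sqrt (1 - (u a)\<^sup>2)"
    have pos: "0 < (\<Sum>c\<in>S. (u c)\<^sup>2)"
      using Sne by (intro sum_pos) (auto simp: S_def)
    then have \<sigma>pos: "0 < \<sigma>" using sq by (simp add: \<sigma>_def)
    have \<sigma>sq: "\<sigma>\<^sup>2 = 1 - (u a)\<^sup>2" using pos sq by (simp add: \<sigma>_def)
    define R where "R = (\<lambda>\<omega>. \<Sum>c\<in>S. u c * X c \<omega>)"
    have [measurable]: "R \<in> borel_measurable M" unfolding R_def by measurable
    have indS: "indep_vars (\<lambda>_. borel) (\<lambda>c \<omega>. u c * X c \<omega>) S"
      by (rule indep_vars_subset[OF indep_vars_compose2[OF ind, of "\<lambda>c x. u c * x" "\<lambda>_. borel"]]) auto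
    have dS: "distributed M lborel (\<lambda>\<omega>. u c * X c \<omega>) (normal_density 0 \<bar>u c\<bar>)" if "c \<in> S" for c
      using normal_density_affine[OF dist[of c], where \<alpha>="u c" and \<beta>=0] that by (simp add: S_def)
    have "distributed M lborel (\<lambda>\<omega>. \<Sum>c\<in>S. u c * X c \<omega>) (normal_density (\<Sum>c\<in>S. 0) (sqrt (\<Sum>c\<in>S. \<bar>u c\<bar>\<^sup>2)))"
      by (rule sum_indep_normal[OF finS Sne indS]) (auto simp: S_def dS)
    then have dR: "distributed M lborel R (normal_density 0 \<sigma>)"
      using sq by (simp add: R_def \<sigma>_def)
    define W where "W = (\<lambda>\<omega>. R \<omega> / \<sigma>)"
    have dW: "distributed M lborel W (\<lambda>x. ennreal (std_normal_density x))"
      using dR normal_standard_normal_convert[OF \<sigma>pos, of R 0] by (simp add: W_def)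
    define Y where "Y = (\<lambda>c \<omega>. if c = a then X a \<omega> else u c * X c \<omega>)"
    have indY: "indep_vars (\<lambda>_. borel) Y (insert a S)"
    proof -
      have "indep_vars (\<lambda>_. borel) (\<lambda>c \<omega>. if c = a then X c \<omega> else u c * X c \<omega>) (insert a S)"
        by (rule indep_vars_subset[OF indep_vars_compose2[OF ind, of "\<lambda>c x. if c = a then x else u c * x" "\<lambda>_. borel"]])
           auto
      then show ?thesis
        by (subst indep_vars_cong[where Y="\<lambda>c \<omega>. if c = a then X c \<omega> else u c * X c \<omega>" and N'="\<lambda>_. borel" and J="insert a S"])
           (auto simp: Y_def fun_eq_iff)
    qed
    have "indep_var borel (Y a) borel (\<lambda>\<omega>. \<Sum>c\<in>S. Y c \<omega>)"
      by (rule indep_vars_sum[OF finS aS indY])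
    moreover have "Y a = X a" by (simp add: Y_def fun_eq_iff)
    moreover have "(\<lambda>\<omega>. \<Sum>c\<in>S. Y c \<omega>) = R"
      using aS by (auto simp: Y_def R_def fun_eq_iff intro!: sum.cong)
    ultimately have "indep_var borel (X a) borel R" by simp
    then have indW: "indep_var borel (X a) borel W"
      using indep_var_compose[of borel "X a" borel R "\<lambda>x. x" borel "\<lambda>x. x / \<sigma>" borel]
      by (simp add: o_def W_def)
    have rs: "(u a)\<^sup>2 + \<sigma>\<^sup>2 = 1" using \<sigma>sq by simp
    have k: "(2 / pi) * (u a)\<^sup>2 \<le> u a * (\<integral>\<omega>. sgn (X a \<omega>) * sgn (u a * X a \<omega> + \<sigma> * W \<omega>) \<partial>M)"
      by (rule key2[OF dist[of a] dW indW ua \<sigma>pos rs])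
    have "(\<lambda>\<omega>. sgn (X a \<omega>) * sgn (u a * X a \<omega> + \<sigma> * W \<omega>)) = (\<lambda>\<omega>. sgn (X a \<omega>) * sgn (\<Sum>c\<in>UNIV. u c * X c \<omega>))"
      using \<sigma>pos by (simp add: lin W_def R_def fun_eq_iff)
    then show ?thesis using k by simp
  qed
qed



lemma path_sum:
  fixes S :: "'n::finite \<Rightarrow> 'n \<Rightarrow> real"
  assumes rows: "\<And>a. (\<Sum>b\<in>UNIV. S a b) = 1" and n: "1 \<le> n"
  shows "(\<Sum>i\<in>PiE {1..n} (\<lambda>_. (UNIV :: 'n set)). \<Prod>m\<in>{1..<n}. S (i m) (i (Suc m))) = real CARD('n)"
  using n
proof (induction n rule: dec_induct)
  case base
  have "card (PiE {1..1::nat} (\<lambda>_. (UNIV :: 'n set))) = CARD('n)"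
    by (simp add: card_PiE)
  then show ?case by simp
next
  case (step n)
  let ?P = "PiE {1..n} (\<lambda>_. (UNIV :: 'n set))"
  have ins: "{1..Suc n} = insert (Suc n) {1..n}" by auto
  have nn: "Suc n \<notin> {1..n}" by simp
  have "(\<Sum>i\<in>PiE {1..Suc n} (\<lambda>_. (UNIV :: 'n set)). \<Prod>m\<in>{1..<Suc n}. S (i m) (i (Suc m)))
      = (\<Sum>(y, g)\<in>UNIV \<times> ?P. \<Prod>m\<in>{1..<Suc n}. S ((g(Suc n := y)) m) ((g(Suc n := y)) (Suc m)))"
    unfolding ins PiE_insert_eq
    by (subst sum.reindex[OF inj_combinator[OF nn]]) (simp only: o_def case_prod_unfold)
  also have "\<dots> = (\<Sum>(y, g)\<in>UNIV \<times> ?P. (\<Prod>m\<in>{1..<n}. S (g m) (g (Suc m))) * S (g n) y)"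
  proof (rule sum.cong[OF refl], clarify)
    fix y g
    have ins2: "{1..<Suc n} = insert n {1..<n}" using step.hyps by auto
    have "(\<Prod>m\<in>{1..<n}. S ((g(Suc n := y)) m) ((g(Suc n := y)) (Suc m))) = (\<Prod>m\<in>{1..<n}. S (g m) (g (Suc m)))"
      by (rule prod.cong) auto
    then show "(\<Prod>m\<in>{1..<Suc n}. S ((g(Suc n := y)) m) ((g(Suc n := y)) (Suc m))) = (\<Prod>m\<in>{1..<n}. S (g m) (g (Suc m))) * S (g n) y"
      unfolding ins2 by (simp add: mult.commute)
  qed
  also have "\<dots> = (\<Sum>g\<in>?P. \<Sum>y\<in>UNIV. (\<Prod>m\<in>{1..<n}. S (g m) (g (Suc m))) * S (g n) y)"
    by (subst sum.cartesian_product[symmetric]) (rule sum.swap)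
  also have "\<dots> = (\<Sum>g\<in>?P. (\<Prod>m\<in>{1..<n}. S (g m) (g (Suc m))))"
    by (simp add: sum_distrib_left[symmetric] rows)
  finally show ?case using step.IH by simp
qed



lemma Yvec_nth: "Yvec U \<omega> m $ j = (\<Sum>c\<in>UNIV. U $ c $ j * \<omega> (m, c))"
  by (simp add: Yvec_def matrix_vector_mult_def transpose_def Xvec_def)

lemma zvec_nth:
  assumes k: "2 \<le> k" and m: "m \<in> {1..k}"
  shows "zvec U k \<omega> m $ j = (if m < k then sgn (\<omega> (m, j)) else 1) * (if 2 \<le> m then sgn (Yvec U \<omega> (m - 1) $ j) else 1)"
  using k m by (cases "m = 1") (auto simp: zvec_def Zvec_def Xvec_def sgn_mult mult.commute)

lemma prod_path:
  fixes A B :: "nat \<Rightarrow> real"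
  assumes k: "2 \<le> k"
  shows "(\<Prod>m\<in>{1..k}. (if m < k then A m else 1) * (if 2 \<le> m then B (m - 1) else 1))
       = (\<Prod>m\<in>{1..<k}. A m) * (\<Prod>m\<in>{1..<k}. B m)"
proof -
  have "(\<Prod>m\<in>{1..k}. (if m < k then A m else 1) * (if 2 \<le> m then B (m - 1) else 1))
      = (\<Prod>m\<in>{1..k}. (if m < k then A m else 1)) * (\<Prod>m\<in>{1..k}. (if 2 \<le> m then B (m - 1) else 1))"
    by (rule prod.distrib)
  moreover have "(\<Prod>m\<in>{1..k}. (if m < k then A m else 1)) = (\<Prod>m\<in>{1..<k}. A m)"
  proof -
    have "{1..k} = insert k {1..<k}" using k by auto
    then have "(\<Prod>m\<in>{1..k}. (if m < k then A m else 1)) = (\<Prod>m\<in>{1..<k}. (if m < k then A m else 1))"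
      by simp
    also have "\<dots> = (\<Prod>m\<in>{1..<k}. A m)" by (rule prod.cong) auto
    finally show ?thesis .
  qed
  moreover have "(\<Prod>m\<in>{1..k}. (if 2 \<le> m then B (m - 1) else 1)) = (\<Prod>m\<in>{1..<k}. B m)"
  proof -
    have "{1..k} = insert 1 {Suc 1..Suc (k - 1)}" using k by auto
    then have "(\<Prod>m\<in>{1..k}. (if 2 \<le> m then B (m - 1) else 1)) = (\<Prod>m\<in>{Suc 1..Suc (k - 1)}. (if 2 \<le> m then B (m - 1) else 1))"
      by simp
    also have "\<dots> = (\<Prod>m\<in>{1..k - 1}. (if 2 \<le> Suc m then B (Suc m - 1) else 1))"
      by (rule prod.shift_bounds_cl_Suc_ivl)
    also have "\<dots> = (\<Prod>m\<in>{1..<k}. B m)"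
      using k by (intro prod.cong) auto
    finally show ?thesis .
  qed
  ultimately show ?thesis by simp
qed

lemma phi_rewrite:
  fixes U :: "real^'n::finite^'n"
  assumes k: "2 \<le> k"
  shows "phiU U k (zvec U k \<omega>) = (1 / real CARD('n)) *
    (\<Sum>i\<in>PiE {1..k} (\<lambda>_. UNIV). \<Prod>m\<in>{1..<k}. sgn (\<omega> (m, i m)) * U $ i m $ i (Suc m) * sgn (\<Sum>c\<in>UNIV. U $ c $ i (Suc m) * \<omega> (m, c)))"
  unfolding phiU_def
proof (intro arg_cong[where f="\<lambda>x. (1 / real CARD('n)) * x"] sum.cong refl)
  fix i :: "nat \<Rightarrow> 'n"
  have "(\<Prod>m\<in>{1..k}. zvec U k \<omega> m $ i m)
      = (\<Prod>m\<in>{1..k}. (if m < k then sgn (\<omega> (m, i m)) else 1) * (if 2 \<le> m then sgn (Yvec U \<omega> (m - 1) $ i (Suc (m - 1))) else 1))"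
    by (rule prod.cong) (use k in \<open>auto simp: zvec_nth\<close>)
  also have "\<dots> = (\<Prod>m\<in>{1..<k}. sgn (\<omega> (m, i m))) * (\<Prod>m\<in>{1..<k}. sgn (Yvec U \<omega> m $ i (Suc m)))"
    by (rule prod_path[OF k, where A="\<lambda>m. sgn (\<omega> (m, i m))" and B="\<lambda>m. sgn (Yvec U \<omega> m $ i (Suc m))"])
  finally have e: "(\<Prod>m\<in>{1..k}. zvec U k \<omega> m $ i m) = \<dots>" .
  show "(\<Prod>m\<in>{1..k}. zvec U k \<omega> m $ i m) * (\<Prod>m\<in>{1..<k}. U $ i m $ i (Suc m)) =
         (\<Prod>m\<in>{1..<k}. sgn (\<omega> (m, i m)) * U $ i m $ i (Suc m) * sgn (\<Sum>c\<in>UNIV. U $ c $ i (Suc m) * \<omega> (m, c)))"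
    unfolding e by (simp add: prod.distrib Yvec_nth mult_ac)
qed



lemma gs_prob: "prob_space std_gauss"
  unfolding std_gauss_def by (rule prob_space_normal_density) simp

lemma sets_gs: "sets std_gauss = sets borel"
  by (simp add: std_gauss_def)

lemma gp_prob: "prob_space (gauss_space k)"
  unfolding gauss_space_def by (rule prob_space_PiM) (rule gs_prob)

lemma comp_meas_gs:
  assumes "p \<in> {1..<k} \<times> (UNIV :: 'n::finite set)"
  shows "(\<lambda>\<omega>. \<omega> p) \<in> measurable (gauss_space k :: ((nat \<times> 'n) \<Rightarrow> real) measure) std_gauss"
  unfolding gauss_space_def by (rule measurable_component_singleton[OF assms])

lemma comp_meas:
  assumes "p \<in> {1..<k} \<times> (UNIV :: 'n::finite set)"
  shows "(\<lambda>\<omega>. \<omega> p) \<in> borel_measurable (gauss_space k :: ((nat \<times> 'n) \<Rightarrow> real) measure)"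
  by (subst measurable_cong_sets[OF refl sets_gs[symmetric]]) (rule comp_meas_gs[OF assms])

lemma comp_dist:
  assumes "p \<in> {1..<k} \<times> (UNIV :: 'n::finite set)"
  shows "distributed (gauss_space k :: ((nat \<times> 'n) \<Rightarrow> real) measure) lborel (\<lambda>\<omega>. \<omega> p) (\<lambda>x. ennreal (std_normal_density x))"
  unfolding distributed_def
proof (intro conjI)
  have "distr (gauss_space k :: ((nat \<times> 'n) \<Rightarrow> real) measure) lborel (\<lambda>\<omega>. \<omega> p)
      = distr (gauss_space k :: ((nat \<times> 'n) \<Rightarrow> real) measure) std_gauss (\<lambda>\<omega>. \<omega> p)"
    by (rule distr_cong) (simp_all add: sets_gs)
  also have "\<dots> = std_gauss"
    unfolding gauss_space_def by (rule distr_PiM_component[OF gs_prob assms])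
  finally show "distr (gauss_space k :: ((nat \<times> 'n) \<Rightarrow> real) measure) lborel (\<lambda>\<omega>. \<omega> p) = density lborel (\<lambda>x. ennreal (std_normal_density x))"
    by (simp add: std_gauss_def)
  show "(\<lambda>x. ennreal (std_normal_density x)) \<in> borel_measurable lborel" by measurable
  show "(\<lambda>\<omega>. \<omega> p) \<in> measurable (gauss_space k :: ((nat \<times> 'n) \<Rightarrow> real) measure) lborel"
    using comp_meas[OF assms] by simp
qed

lemma comp_indep:
  assumes k: "2 \<le> k"
  shows "prob_space.indep_vars (gauss_space k :: ((nat \<times> 'n::finite) \<Rightarrow> real) measure) (\<lambda>_. borel) (\<lambda>p \<omega>. \<omega> p) ({1..<k} \<times> UNIV)"
proof -
  interpret prob_space "gauss_space k :: ((nat \<times> 'n) \<Rightarrow> real) measure" by (rule gp_prob)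
  let ?I = "{1..<k} \<times> (UNIV :: 'n set)"
  have ne: "?I \<noteq> {}" using k by auto
  have "indep_vars (\<lambda>_. std_gauss) (\<lambda>p \<omega>. \<omega> p) ?I"
  proof (subst indep_vars_iff_distr_eq_PiM'[OF ne])
    show "random_variable std_gauss (\<lambda>\<omega>. \<omega> p)" if "p \<in> ?I" for p
      by (rule comp_meas_gs[OF that])
    have "distr (gauss_space k) (Pi\<^sub>M ?I (\<lambda>_. std_gauss)) (\<lambda>x. restrict x ?I) = distr (gauss_space k) (gauss_space k) (\<lambda>x. x)"
      by (rule distr_cong) (auto simp: gauss_space_def space_PiM PiE_def extensional_restrict)
    also have "\<dots> = Pi\<^sub>M ?I (\<lambda>_. std_gauss)" by (simp add: gauss_space_def)
    also have "\<dots> = Pi\<^sub>M ?I (\<lambda>p. distr (gauss_space k) std_gauss (\<lambda>\<omega>. \<omega> p))"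
      by (rule PiM_cong) (auto simp: gauss_space_def distr_PiM_component[OF gs_prob])
    finally show "distr (gauss_space k) (Pi\<^sub>M ?I (\<lambda>_. std_gauss)) (\<lambda>x. restrict x ?I) = Pi\<^sub>M ?I (\<lambda>p. distr (gauss_space k) std_gauss (\<lambda>\<omega>. \<omega> p))" .
  qed
  then have "indep_vars (\<lambda>_. borel) (\<lambda>p \<omega>. (\<lambda>p x. x) p (\<omega> p)) ?I"
    by (rule indep_vars_compose2) (simp add: measurable_ident_sets sets_gs)
  then show ?thesis by simp
qed

lemma block_indep:
  assumes m: "m \<in> {1..<k}"
  shows "prob_space.indep_vars (gauss_space k :: ((nat \<times> 'n::finite) \<Rightarrow> real) measure) (\<lambda>_. borel) (\<lambda>c \<omega>. \<omega> (m, c)) UNIV"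
proof -
  interpret prob_space "gauss_space k :: ((nat \<times> 'n) \<Rightarrow> real) measure" by (rule gp_prob)
  let ?I = "{1..<k} \<times> (UNIV :: 'n set)"
  have "indep_vars (\<lambda>_. std_gauss) (\<lambda>c \<omega>. \<omega> (m, c)) (UNIV :: 'n set)"
  proof (subst indep_vars_iff_distr_eq_PiM')
    show "(UNIV :: 'n set) \<noteq> {}" by simp
    show "random_variable std_gauss (\<lambda>\<omega>. \<omega> (m, c))" for c
      by (rule comp_meas_gs) (use m in auto)
    have "distr (gauss_space k) (Pi\<^sub>M (UNIV :: 'n set) (\<lambda>_. std_gauss)) (\<lambda>x. \<lambda>c\<in>UNIV. x (m, c)) = Pi\<^sub>M UNIV (\<lambda>_. std_gauss)"
      unfolding gauss_space_def
      by (rule distr_PiM_reindex[where f="\<lambda>c. (m, c)" and M="\<lambda>_. std_gauss", simplified])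
         (use m gs_prob in \<open>auto simp: inj_on_def\<close>)
    also have "\<dots> = Pi\<^sub>M UNIV (\<lambda>c. distr (gauss_space k) std_gauss (\<lambda>\<omega>. \<omega> (m, c)))"
      by (rule PiM_cong) (use m in \<open>auto simp: gauss_space_def distr_PiM_component[OF gs_prob]\<close>)
    finally show "distr (gauss_space k) (Pi\<^sub>M (UNIV :: 'n set) (\<lambda>_. std_gauss)) (\<lambda>x. \<lambda>c\<in>UNIV. x (m, c)) = Pi\<^sub>M UNIV (\<lambda>c. distr (gauss_space k) std_gauss (\<lambda>\<omega>. \<omega> (m, c)))" .
  qed
  then have "indep_vars (\<lambda>_. borel) (\<lambda>c \<omega>. (\<lambda>c x. x) c (\<omega> (m, c))) (UNIV :: 'n set)"
    by (rule indep_vars_compose2) (simp add: measurable_ident_sets sets_gs)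
  then show ?thesis by simp
qed



theorem mainTheorem13:
  fixes U :: "real^'n::finite^'n" and k :: nat
  assumes "orthogonal_matrix U" and "k \<ge> 2"
  shows "(2 / pi) ^ (k - 1) \<le>
    (\<integral>\<omega>. phiU U k (zvec U k \<omega>) \<partial>(gauss_space k :: ((nat \<times> 'n) \<Rightarrow> real) measure))"
proof -
  have k: "2 \<le> k" by fact
  let ?P = "gauss_space k :: ((nat \<times> 'n) \<Rightarrow> real) measure"
  interpret P: prob_space ?P by (rule gp_prob)
  let ?I = "{1..<k} \<times> (UNIV :: 'n set)"
  let ?L = "{1..<k}"
  let ?Pa = "PiE {1..k} (\<lambda>_. (UNIV :: 'n set))"
  define G where "G = (\<lambda>(i :: nat \<Rightarrow> 'n) m (\<omega> :: (nat \<times> 'n) \<Rightarrow> real).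
      sgn (\<omega> (m, i m)) * U $ i m $ i (Suc m) * sgn (\<Sum>c\<in>UNIV. U $ c $ i (Suc m) * \<omega> (m, c)))"
  have orth: "transpose U ** U = mat 1" "U ** transpose U = mat 1"
    using assms(1) by (auto simp: orthogonal_matrix_def)
  have col: "(\<Sum>c\<in>UNIV. (U $ c $ b)\<^sup>2) = 1" for b
  proof -
    have "(transpose U ** U) $ b $ b = 1" using orth(1) by (simp add: mat_def)
    then show ?thesis by (simp add: matrix_matrix_mult_def transpose_def power2_eq_square)
  qed
  have row: "(\<Sum>b\<in>UNIV. (U $ a $ b)\<^sup>2) = 1" for a
  proof -
    have "(U ** transpose U) $ a $ a = 1" using orth(2) by (simp add: mat_def)
    then show ?thesis by (simp add: matrix_matrix_mult_def transpose_def power2_eq_square)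
  qed
  have Gmeas: "G i m \<in> borel_measurable ?P" if m: "m \<in> ?L" for i m
  proof -
    have [measurable]: "(\<lambda>\<omega>. \<omega> (m, c)) \<in> borel_measurable ?P" for c
      by (rule comp_meas) (use m in auto)
    show ?thesis unfolding G_def by measurable
  qed
  have Gbound: "\<bar>G i m \<omega>\<bar> \<le> \<bar>U $ i m $ i (Suc m)\<bar>" for i m \<omega>
    by (auto simp: G_def abs_mult sgn_real_def)
  have Gint: "integrable ?P (G i m)" if m: "m \<in> ?L" for i m
    by (rule P.integrable_const_bound[where B="\<bar>U $ i m $ i (Suc m)\<bar>"]) (auto intro: Gbound Gmeas[OF m])
  have Glow: "(2 / pi) * (U $ i m $ i (Suc m))\<^sup>2 \<le> (\<integral>\<omega>. G i m \<omega> \<partial>?P)" if m: "m \<in> ?L" for i m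
  proof -
    have dist: "distributed ?P lborel (\<lambda>\<omega>. \<omega> (m, c)) (\<lambda>x. ennreal (std_normal_density x))" for c
      by (rule comp_dist) (use m in auto)
    have "(2 / pi) * (U $ i m $ i (Suc m))\<^sup>2 \<le> U $ i m $ i (Suc m) *
        (\<integral>\<omega>. sgn (\<omega> (m, i m)) * sgn (\<Sum>c\<in>UNIV. U $ c $ i (Suc m) * \<omega> (m, c)) \<partial>?P)"
      by (rule P.block[OF block_indep[OF m] dist col])
    also have "\<dots> = (\<integral>\<omega>. U $ i m $ i (Suc m) * (sgn (\<omega> (m, i m)) * sgn (\<Sum>c\<in>UNIV. U $ c $ i (Suc m) * \<omega> (m, c))) \<partial>?P)"
      by (rule integral_mult_right_zero[symmetric])
    also have "\<dots> = (\<integral>\<omega>. G i m \<omega> \<partial>?P)"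
      by (rule Bochner_Integration.integral_cong) (simp_all add: G_def mult_ac)
    finally show ?thesis .
  qed
  have prodint: "(\<integral>\<omega>. (\<Prod>m\<in>?L. G i m \<omega>) \<partial>?P) = (\<Prod>m\<in>?L. \<integral>\<omega>. G i m \<omega> \<partial>?P)" for i
  proof -
    define K where "K = (\<lambda>m::nat. {m} \<times> (UNIV :: 'n set))"
    have "P.indep_vars (\<lambda>m. PiM (K m) (\<lambda>_. borel)) (\<lambda>m \<omega>. restrict (\<lambda>p. \<omega> p) (K m)) ?L"
      by (rule P.indep_vars_restrict[OF comp_indep[OF k]])
         (auto simp: K_def disjoint_family_on_def)
    then have "P.indep_vars (\<lambda>_. borel) (\<lambda>m \<omega>. (\<lambda>m f. sgn (f (m, i m)) * U $ i m $ i (Suc m) * sgn (\<Sum>c\<in>UNIV. U $ c $ i (Suc m) * f (m, c))) m (restrict (\<lambda>p. \<omega> p) (K m))) ?L"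
    proof (rule P.indep_vars_compose2)
      fix m assume "m \<in> ?L"
      have [measurable]: "(\<lambda>f. f (m, c)) \<in> borel_measurable (PiM (K m) (\<lambda>_. borel))" for c
        by (rule measurable_component_singleton) (simp add: K_def)
      show "(\<lambda>f. sgn (f (m, i m)) * U $ i m $ i (Suc m) * sgn (\<Sum>c\<in>UNIV. U $ c $ i (Suc m) * f (m, c))) \<in> borel_measurable (PiM (K m) (\<lambda>_. borel))"
        by measurable
    qed
    moreover have "(\<lambda>m \<omega>. (\<lambda>m f. sgn (f (m, i m)) * U $ i m $ i (Suc m) * sgn (\<Sum>c\<in>UNIV. U $ c $ i (Suc m) * f (m, c))) m (restrict (\<lambda>p. \<omega> p) (K m))) = G i"
      by (simp add: G_def K_def fun_eq_iff)
    ultimately have ind: "P.indep_vars (\<lambda>_. borel) (G i) ?L" by simp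
    show ?thesis
      by (rule P.indep_vars_lebesgue_integral[OF _ ind]) (auto intro: Gint)
  qed
  have prodmeas: "(\<lambda>\<omega>. \<Prod>m\<in>?L. G i m \<omega>) \<in> borel_measurable ?P" for i
    by (rule borel_measurable_prod) (auto intro: Gmeas)
  have prodinteg: "integrable ?P (\<lambda>\<omega>. \<Prod>m\<in>?L. G i m \<omega>)" for i
  proof (rule P.integrable_const_bound[where B="\<Prod>m\<in>?L. \<bar>U $ i m $ i (Suc m)\<bar>"])
    show "AE \<omega> in ?P. norm (\<Prod>m\<in>?L. G i m \<omega>) \<le> (\<Prod>m\<in>?L. \<bar>U $ i m $ i (Suc m)\<bar>)"
      by (auto simp: abs_prod intro!: prod_mono Gbound)
  qed (rule prodmeas)
  have "(\<integral>\<omega>. phiU U k (zvec U k \<omega>) \<partial>?P)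
      = (\<integral>\<omega>. (1 / real CARD('n)) * (\<Sum>i\<in>?Pa. \<Prod>m\<in>?L. G i m \<omega>) \<partial>?P)"
    by (rule Bochner_Integration.integral_cong[OF refl]) (simp add: phi_rewrite[OF k] G_def)
  also have "\<dots> = (1 / real CARD('n)) * (\<Sum>i\<in>?Pa. \<integral>\<omega>. (\<Prod>m\<in>?L. G i m \<omega>) \<partial>?P)"
  proof -
    have "(\<integral>\<omega>. (\<Sum>i\<in>?Pa. \<Prod>m\<in>?L. G i m \<omega>) \<partial>?P) = (\<Sum>i\<in>?Pa. \<integral>\<omega>. (\<Prod>m\<in>?L. G i m \<omega>) \<partial>?P)"
      by (rule Bochner_Integration.integral_sum) (rule prodinteg)
    then show ?thesis by (subst integral_mult_right_zero) simp
  qed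
  also have "\<dots> = (1 / real CARD('n)) * (\<Sum>i\<in>?Pa. \<Prod>m\<in>?L. \<integral>\<omega>. G i m \<omega> \<partial>?P)"
    by (intro arg_cong2[where f="(*)"] refl sum.cong prodint)
  finally have eq: "(\<integral>\<omega>. phiU U k (zvec U k \<omega>) \<partial>?P) = (1 / real CARD('n)) * (\<Sum>i\<in>?Pa. \<Prod>m\<in>?L. \<integral>\<omega>. G i m \<omega> \<partial>?P)" .
  have low: "(2 / pi) ^ (k - 1) * (\<Prod>m\<in>?L. (U $ i m $ i (Suc m))\<^sup>2) \<le> (\<Prod>m\<in>?L. \<integral>\<omega>. G i m \<omega> \<partial>?P)" for i
  proof -
    have "(2 / pi) ^ (k - 1) * (\<Prod>m\<in>?L. (U $ i m $ i (Suc m))\<^sup>2) = (\<Prod>m\<in>?L. (2 / pi) * (U $ i m $ i (Suc m))\<^sup>2)"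
      by (simp only: prod.distrib prod_constant card_atLeastLessThan)
    also have "\<dots> \<le> (\<Prod>m\<in>?L. \<integral>\<omega>. G i m \<omega> \<partial>?P)"
    proof (rule prod_mono)
      fix m assume m: "m \<in> ?L"
      show "0 \<le> (2 / pi) * (U $ i m $ i (Suc m))\<^sup>2 \<and> (2 / pi) * (U $ i m $ i (Suc m))\<^sup>2 \<le> (\<integral>\<omega>. G i m \<omega> \<partial>?P)"
        using Glow[OF m] by (intro conjI) simp_all
    qed
    finally show ?thesis .
  qed
  have cnt: "(\<Sum>i\<in>?Pa. \<Prod>m\<in>?L. (U $ i m $ i (Suc m))\<^sup>2) = real CARD('n)"
    by (rule path_sum[where S="\<lambda>a b. (U $ a $ b)\<^sup>2"]) (use row k in auto)
  have "(2 / pi) ^ (k - 1) = (1 / real CARD('n)) * (\<Sum>i\<in>?Pa. (2 / pi) ^ (k - 1) * (\<Prod>m\<in>?L. (U $ i m $ i (Suc m))\<^sup>2))"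
    unfolding sum_distrib_left[symmetric] cnt by simp
  also have "\<dots> \<le> (1 / real CARD('n)) * (\<Sum>i\<in>?Pa. \<Prod>m\<in>?L. \<integral>\<omega>. G i m \<omega> \<partial>?P)"
    by (intro mult_left_mono sum_mono low) simp
  also have "\<dots> = (\<integral>\<omega>. phiU U k (zvec U k \<omega>) \<partial>?P)" by (rule eq[symmetric])
  finally show ?thesis .
qed

end
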